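(* Let $(X,T,Y)$ be a random triple as described in the context, let $\psi$ be a score variable satisfying Assumption 1, and let $\mathcal G=\{g_\theta:\theta\in\Theta\}$ be a parametrized class of utility functions. Suppose the policy class is correctly specified for the surrogate loss, in the sense that $$\mathcal G\cap\Big(\operatorname*{argmin}_{g\ \text{unconstrained}}\mathbb E\big[|\psi|\, l(g(X),\operatorname{sign}(\psi))\big]\Big)\neq\varnothing,$$ where the argmin ranges over all measurable functions $g:\mathcal X\to\mathbb R$. Then every minimizer of the surrogate-loss risk is an optimal policy: for all $\theta^*\in\operatorname*{argmin}_{\theta\in\Theta}L(\theta)$, $$J(\theta^* )=\max_{\pi\ \text{unconstrained}}J(\pi),$$ where the maximum ranges over all measurable policies $\pi:\mathcal X\to\{-1,+1\}$.
   Context: $X$ is a context taking values in a space $\mathcal X$, $T\in\{-1,1\}$ is a treatment, $Y\in\mathbb R$ is an outcome, and $Y(-1),Y(1)$ are potential outcomes with $Y=Y(T)$ and $Y(t)\perp T\mid X$ for each $t$. A score variable $\psi$ is a real-valued random variable depending on observables. Assumption 1: $\mathbb E[\psi\mid X]=\mathbb E[Y(1)-Y(-1)\mid X]$ almost surely and $\mathbb E[|\psi|]<\infty$. For a policy $\pi:\mathcal X\to\{-1,+1\}$, $J(\pi)=\mathbb E[\pi(X)(Y(1)-Y(-1))]$. $\Theta\subseteq\mathbb R^d$, each $g_\theta:\mathcal X\to\mathbb R$ is measurable, and $J(\theta)=J(\operatorname{sign}(g_\theta(\cdot)))=\mathbb E[\operatorname{sign}(g_\theta(X))(Y(1)-Y(-1))]$.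 The surrogate (logistic) loss is $l(g,s)=2\log(1+\exp(g))-(s+1)g$ for $g\in\mathbb R$, $s\in\{-1,1\}$, and the population surrogate risk is $L(\theta)=\mathbb E[|\psi|\, l(g_\theta(X),\operatorname{sign}(\psi))]$. *)

theory Defs
  imports "HOL-Probability.Probability"
begin

definition sgnpm :: "real \<Rightarrow> real" where
  "sgnpm x = (if x \<ge> 0 then 1 else -1)"

definition surr_loss :: "real \<Rightarrow> real \<Rightarrow> real" where
  "surr_loss g s = 2 * ln (1 + exp g) - (s + 1) * g"

definition sigmaX :: "'w measure \<Rightarrow> ('w \<Rightarrow> 'x) \<Rightarrow> 'x measure \<Rightarrow> 'w measure" where
  "sigmaX M X Sx = vimage_algebra (space M) X Sx"

definition cond_indep :: "'w measure \<Rightarrow> 'w measure \<Rightarrow> ('w \<Rightarrow> real) \<Rightarrow> ('w \<Rightarrow> real) \<Rightarrow> bool" where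
  "cond_indep M F U V \<longleftrightarrow>
     (\<forall>A\<in>sets borel. \<forall>B\<in>sets borel. AE w in M.
        real_cond_exp M F (\<lambda>w. indicator A (U w) * indicator B (V w)) w =
        real_cond_exp M F (\<lambda>w. indicator A (U w)) w * real_cond_exp M F (\<lambda>w. indicator B (V w)) w)"

definition Jpol :: "'w measure \<Rightarrow> ('w \<Rightarrow> 'x) \<Rightarrow> ('w \<Rightarrow> real) \<Rightarrow> ('w \<Rightarrow> real) \<Rightarrow> ('x \<Rightarrow> real) \<Rightarrow> real" where
  "Jpol M X Y0 Y1 \<pi> = (\<integral>w. \<pi> (X w) * (Y1 w - Y0 w) \<partial>M)"

definition policies :: "'x measure \<Rightarrow> ('x \<Rightarrow> real) set" where
  "policies Sx = {\<pi> \<in> borel_measurable Sx. \<forall>x\<in>space Sx. \<pi> x \<in> {-1, 1}}"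

text \<open>Surrogate risk of a utility function g: E[|psi| l(g(X), sign psi)]
  (a nonnegative integrand, so taken as a nonnegative Lebesgue integral).\<close>
definition surr_risk :: "'w measure \<Rightarrow> ('w \<Rightarrow> 'x) \<Rightarrow> ('w \<Rightarrow> real) \<Rightarrow> ('x \<Rightarrow> real) \<Rightarrow> ennreal" where
  "surr_risk M X \<psi> g = (\<integral>\<^sup>+ w. ennreal (\<bar>\<psi> w\<bar> * surr_loss (g (X w)) (sgnpm (\<psi> w))) \<partial>M)"

end

theory Submission
  imports Defs
begin

lemma ln_bound:
  fixes a t :: real assumes "0 \<le> a" "a \<le> 1"
  shows "ln (1 - a + a * exp t) \<le> a * t + t\<^sup>2 / 8"
proof (cases "t \<ge> 0")
  case True
  have "- t * a + ln (1 + a * (exp t - 1)) \<le> t\<^sup>2 / 8"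
    using Hoeffdings_lemma_aux[OF True assms(1)] by simp
  moreover have "1 + a * (exp t - 1) = 1 - a + a * exp t" by (simp add: algebra_simps)
  ultimately show ?thesis by (simp add: algebra_simps)
next
  case False
  have pos: "1 + (1 - a) * (exp (-t) - 1) > 0"
  proof -
    have "exp (-t) \<ge> 1" using False by simp
    then show ?thesis using assms by (smt (verit) mult_nonneg_nonneg)
  qed
  have h: "- (-t) * (1 - a) + ln (1 + (1 - a) * (exp (-t) - 1)) \<le> (-t)\<^sup>2 / 8"
    using Hoeffdings_lemma_aux[of "-t" "1 - a"] False assms by (simp only:)
  have "1 - a + a * exp t = exp t * (1 + (1 - a) * (exp (-t) - 1))"
    by (simp add: algebra_simps exp_minus field_simps)
  then have "ln (1 - a + a * exp t) = t + ln (1 + (1 - a) * (exp (-t) - 1))"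
    using pos by (simp add: ln_mult)
  then show ?thesis using h by (simp add: algebra_simps)
qed

definition sigm :: "real \<Rightarrow> real" where "sigm g = exp g / (1 + exp g)"

lemma loss_bound:
  "surr_loss (g + t) s \<le> surr_loss g s + t * (2 * sigm g - (s + 1)) + t\<^sup>2 / 4"
proof -
  define a where "a = sigm g"
  have a: "0 \<le> a" "a \<le> 1" "a < 1" unfolding a_def sigm_def
    by (simp_all add: add_pos_pos)
  have p: "1 + exp g > 0" by (simp add: add_pos_pos)
  have "1 + exp (g + t) = (1 + exp g) * (1 - a + a * exp t)"
    unfolding a_def sigm_def using p by (simp add: field_simps exp_add)
  moreover have "1 - a + a * exp t > 0" using a
    by (smt (verit) exp_gt_zero mult_nonneg_nonneg)
  ultimately have "ln (1 + exp (g + t)) = ln (1 + exp g) + ln (1 - a + a * exp t)"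
    using p by (simp add: ln_mult)
  then show ?thesis using ln_bound[OF a(1,2), of t] unfolding surr_loss_def a_def
    by (simp add: algebra_simps)
qed

lemma loss_nonneg: "s \<in> {-1, 1} \<Longrightarrow> surr_loss g s \<ge> 0"
proof -
  assume s: "s \<in> {-1, 1}"
  have "ln (1 + exp g) \<ge> 0" by (simp add: add_pos_pos)
  moreover have "ln (1 + exp g) \<ge> g"
    by (metis add_pos_pos exp_gt_zero exp_le_cancel_iff exp_ln less_add_same_cancel2 less_eq_real_def zero_less_one)
  ultimately show ?thesis using s unfolding surr_loss_def by auto
qed


lemma sgnpm_borel[measurable]: "sgnpm \<in> borel_measurable borel"
  unfolding sgnpm_def by measurable

lemma surr_loss_meas[measurable]:
  assumes [measurable]: "f \<in> borel_measurable N" "h \<in> borel_measurable N"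
  shows "(\<lambda>w. surr_loss (f w) (h w)) \<in> borel_measurable N"
  unfolding surr_loss_def by measurable

lemma sigm_meas[measurable]:
  assumes [measurable]: "f \<in> borel_measurable N"
  shows "(\<lambda>w. sigm (f w)) \<in> borel_measurable N"
  unfolding sigm_def by measurable

lemma sgnpm_meas[measurable]:
  assumes [measurable]: "f \<in> borel_measurable N"
  shows "(\<lambda>w. sgnpm (f w)) \<in> borel_measurable N"
  unfolding sgnpm_def by measurable

lemma sgnpm_vals: "sgnpm x \<in> {-1, 1}" unfolding sgnpm_def by auto

lemma sigm_bounds: "0 < sigm g" "sigm g < 1"
  unfolding sigm_def by (simp_all add: add_pos_pos)

lemma sigm_pos_half: "0 \<le> g \<Longrightarrow> 1/2 \<le> sigm g"
  unfolding sigm_def by (simp add: field_simps add_pos_pos)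

lemma sigm_neg_half: "g < 0 \<Longrightarrow> sigm g < 1/2"
  unfolding sigm_def by (simp add: field_simps add_pos_pos)

lemma lin_aux: "(a::real) = - q \<Longrightarrow> b = r \<Longrightarrow> r \<le> e \<Longrightarrow> 0 < q \<Longrightarrow> e = q / 4 \<Longrightarrow> a + b < 0"
  by linarith

lemma quad_zero:
  fixes D C :: real
  assumes "\<And>t. 0 \<le> t * D + t\<^sup>2 / 4 * C" "0 \<le> C"
  shows "D = 0"
proof (rule ccontr)
  assume D: "D \<noteq> 0"
  define t where "t = - D / (C + 1)"
  have C1: "C + 1 > 0" using assms by simp
  have "t * D = - (D\<^sup>2 / (C + 1))" unfolding t_def by (simp add: power2_eq_square)
  moreover have "t\<^sup>2 / 4 * C = D\<^sup>2 * (C / (C + 1)) / (4 * (C + 1))"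
    unfolding t_def using C1 by (simp add: power2_eq_square field_simps)
  moreover have "C / (C + 1) \<le> 1" using C1 by simp
  then have "D\<^sup>2 * (C / (C + 1)) / (4 * (C + 1)) \<le> D\<^sup>2 / (4 * (C + 1))"
    using C1 by (intro divide_right_mono mult_left_le) auto
  moreover have "D\<^sup>2 / (C + 1) > 0" using D C1 by simp
  moreover have "D\<^sup>2 / (4 * (C + 1)) = (D\<^sup>2 / (C + 1)) / 4" by simp
  ultimately have "t * D + t\<^sup>2 / 4 * C < 0"
    using lin_aux[of "t * D" "D\<^sup>2 / (C + 1)"] by blast
  with assms(1)[of t] show False by simp
qed

theorem theorem1:
  fixes M :: "'w measure" and Sx :: "'x measure"
    and X :: "'w \<Rightarrow> 'x" and T Y Y0 Y1 \<psi> :: "'w \<Rightarrow> real"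
    and \<Theta> :: "(real ^ 'd) set" and g :: "real ^ 'd \<Rightarrow> 'x \<Rightarrow> real"
  assumes "prob_space M"
    and X_meas: "X \<in> measurable M Sx"
    and T_meas: "T \<in> borel_measurable M" and T_vals: "\<forall>w\<in>space M. T w \<in> {-1, 1}"
    and Y0_meas: "Y0 \<in> borel_measurable M" and Y1_meas: "Y1 \<in> borel_measurable M"
    and Y_def: "\<forall>w\<in>space M. Y w = (if T w = 1 then Y1 w else Y0 w)"
    and unconf0: "cond_indep M (sigmaX M X Sx) Y0 T"
    and unconf1: "cond_indep M (sigmaX M X Sx) Y1 T"
    and int_tau: "integrable M (\<lambda>w. Y1 w - Y0 w)"
    and psi_obs: "\<exists>\<Psi>. \<Psi> \<in> borel_measurable (Sx \<Otimes>\<^sub>M borel \<Otimes>\<^sub>M borel)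
                     \<and> (\<forall>w\<in>space M. \<psi> w = \<Psi> (X w, T w, Y w))"
    and A1_int: "integrable M \<psi>"
    and A1_cond: "AE w in M. real_cond_exp M (sigmaX M X Sx) \<psi> w
                             = real_cond_exp M (sigmaX M X Sx) (\<lambda>w. Y1 w - Y0 w) w"
    and g_meas: "\<forall>\<theta>\<in>\<Theta>. g \<theta> \<in> borel_measurable Sx"
    and well_spec: "\<exists>\<theta>\<in>\<Theta>. \<forall>h\<in>borel_measurable Sx.
                      surr_risk M X \<psi> (g \<theta>) \<le> surr_risk M X \<psi> h"
    and th_in: "\<theta>s \<in> \<Theta>"
    and th_min: "\<forall>\<theta>\<in>\<Theta>. surr_risk M X \<psi> (g \<theta>s) \<le> surr_risk M X \<psi> (g \<theta>)"
  shows "Jpol M X Y0 Y1 (\<lambda>x. sgnpm (g \<theta>s x))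
           = (SUP \<pi>\<in>policies Sx. Jpol M X Y0 Y1 \<pi>)"
  proof -
  interpret P: prob_space M by fact
  define F where "F = sigmaX M X Sx"
  have Xf: "X \<in> space M \<rightarrow> space Sx" using X_meas by (simp add: measurable_def)
  have spF: "space F = space M" unfolding F_def sigmaX_def by simp
  have setsF: "sets F = {X -` A \<inter> space M | A. A \<in> sets Sx}"
    unfolding F_def sigmaX_def by (rule sets_vimage_algebra2[OF Xf])
  have subF: "sets F \<subseteq> sets M"
    unfolding F_def sigmaX_def by (rule sets_image_in_sets[OF refl X_meas])
  have XF: "X \<in> measurable F Sx"
    unfolding F_def sigmaX_def by (rule measurable_vimage_algebra1[OF Xf])
  note X_meas[measurable]
  interpret S: finite_measure_subalgebra M F
    by unfold_locales (auto simp: subalgebra_def spF subF)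
  have psi_m[measurable]: "\<psi> \<in> borel_measurable M" using A1_int by (rule borel_measurable_integrable)
  have tau_m[measurable]: "(\<lambda>w. Y1 w - Y0 w) \<in> borel_measurable M" using int_tau by (rule borel_measurable_integrable)
  define G where "G = g \<theta>s"
  have G_m[measurable]: "G \<in> borel_measurable Sx" using g_meas th_in G_def by auto
  have Gmin: "surr_risk M X \<psi> G \<le> surr_risk M X \<psi> h" if "h \<in> borel_measurable Sx" for h
  proof -
    obtain \<theta>0 where "\<theta>0 \<in> \<Theta>" "\<forall>h\<in>borel_measurable Sx. surr_risk M X \<psi> (g \<theta>0) \<le> surr_risk M X \<psi> h"
      using well_spec by blast
    then show ?thesis using th_min that unfolding G_def by (meson order_trans)
  qed
  define lf where "lf w = \<bar>\<psi> w\<bar> * surr_loss (G (X w)) (sgnpm (\<psi> w))" for w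
  have l_m[measurable]: "lf \<in> borel_measurable M" unfolding lf_def by measurable
  have l_nn: "0 \<le> lf w" for w unfolding lf_def using loss_nonneg[OF sgnpm_vals] by simp
  have R0: "surr_risk M X \<psi> (\<lambda>_. 0) = ennreal (\<integral>w. \<bar>\<psi> w\<bar> * (2 * ln 2) \<partial>M)"
    unfolding surr_risk_def surr_loss_def
    by (subst nn_integral_eq_integral[symmetric]) (auto intro!: integrable_mult_left A1_int)
  have RG: "surr_risk M X \<psi> G < \<infinity>"
    using Gmin[of "\<lambda>_. 0"] R0 by (simp add: top.not_eq_extremum le_less_trans)
  have RG': "surr_risk M X \<psi> G = (\<integral>\<^sup>+w. ennreal (lf w) \<partial>M)"
    unfolding surr_risk_def lf_def ..
  have l_int: "integrable M lf"
    by (rule integrableI_nonneg) (use l_nn RG RG' in auto)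
  have RGe: "surr_risk M X \<psi> G = ennreal (\<integral>w. lf w \<partial>M)"
    using RG' nn_integral_eq_integral[OF l_int] l_nn by simp
  define d where "d w = \<bar>\<psi> w\<bar> * (2 * sigm (G (X w)) - (sgnpm (\<psi> w) + 1))" for w
  have d_m[measurable]: "d \<in> borel_measurable M" unfolding d_def by measurable
  have d_bd: "\<bar>d w\<bar> \<le> 2 * \<bar>\<psi> w\<bar>" for w
  proof -
    have "\<bar>2 * sigm (G (X w)) - (sgnpm (\<psi> w) + 1)\<bar> \<le> 2"
      using sigm_bounds[of "G (X w)"] sgnpm_vals[of "\<psi> w"] by auto
    then show ?thesis unfolding d_def abs_mult by (simp add: mult_left_mono mult.commute)
  qed
  have D0: "(\<integral>w. indicator B (X w) * d w \<partial>M) = 0" if B[measurable]: "B \<in> sets Sx" for B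
  proof (rule quad_zero)
    show "0 \<le> (\<integral>w. \<bar>\<psi> w\<bar> \<partial>M)" by simp
  next
    fix t :: real
    define h where "h x = G x + t * indicator B x" for x
    have h_m[measurable]: "h \<in> borel_measurable Sx" unfolding h_def by measurable
    define r where "r w = lf w + t * (indicator B (X w) * d w) + t\<^sup>2 / 4 * \<bar>\<psi> w\<bar>" for w
    have id_int: "integrable M (\<lambda>w. indicator B (X w) * d w)"
      by (rule Bochner_Integration.integrable_bound[where f="\<lambda>w. 2 * \<bar>\<psi> w\<bar>"])
         (auto intro!: integrable_mult_right A1_int simp: indicator_def d_bd abs_mult)
    have r_int: "integrable M r" unfolding r_def
      using l_int id_int A1_int by (intro Bochner_Integration.integrable_add integrable_mult_right) auto
    have pw: "\<bar>\<psi> w\<bar> * surr_loss (h (X w)) (sgnpm (\<psi> w)) \<le> r w" for w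
    proof (cases "X w \<in> B")
      case True
      have "\<bar>\<psi> w\<bar> * surr_loss (G (X w) + t) (sgnpm (\<psi> w)) \<le>
            \<bar>\<psi> w\<bar> * (surr_loss (G (X w)) (sgnpm (\<psi> w)) + t * (2 * sigm (G (X w)) - (sgnpm (\<psi> w) + 1)) + t\<^sup>2 / 4)"
        by (intro mult_left_mono loss_bound) auto
      then show ?thesis using True unfolding r_def h_def lf_def d_def by (simp add: algebra_simps)
    next
      case False
      then show ?thesis unfolding r_def h_def lf_def by simp
    qed
    have r_nn: "0 \<le> r w" for w
      using pw[of w] loss_nonneg[OF sgnpm_vals, of "h (X w)" "\<psi> w"]
      by (meson abs_ge_zero mult_nonneg_nonneg order_trans)
    have "surr_risk M X \<psi> h \<le> (\<integral>\<^sup>+w. ennreal (r w) \<partial>M)"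
      unfolding surr_risk_def by (intro nn_integral_mono ennreal_leI pw)
    also have "\<dots> = ennreal (\<integral>w. r w \<partial>M)"
      using nn_integral_eq_integral[OF r_int] r_nn by simp
    finally have "ennreal (\<integral>w. lf w \<partial>M) \<le> ennreal (\<integral>w. r w \<partial>M)"
      using Gmin[OF h_m] RGe by simp
    moreover have "0 \<le> (\<integral>w. r w \<partial>M)" using r_nn by simp
    ultimately have "(\<integral>w. lf w \<partial>M) \<le> (\<integral>w. r w \<partial>M)" by simp
    moreover have "(\<integral>w. r w \<partial>M) = (\<integral>w. lf w \<partial>M) + t * (\<integral>w. indicator B (X w) * d w \<partial>M)
          + t\<^sup>2 / 4 * (\<integral>w. \<bar>\<psi> w\<bar> \<partial>M)"
      unfolding r_def using l_int id_int A1_int by simp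
    ultimately show "0 \<le> t * (\<integral>w. indicator B (X w) * d w \<partial>M) + t\<^sup>2 / 4 * (\<integral>w. \<bar>\<psi> w\<bar> \<partial>M)"
      by simp
  qed
  define \<phi> where "\<phi> = real_cond_exp M F \<psi>"
  have phi_F[measurable]: "\<phi> \<in> borel_measurable F" unfolding \<phi>_def by simp
  have phi_M[measurable]: "\<phi> \<in> borel_measurable M" unfolding \<phi>_def by simp
  have phi_int: "integrable M \<phi>" unfolding \<phi>_def using A1_int by (rule S.real_cond_exp_int)
  define e where "e w = \<bar>\<psi> w\<bar> * (2 * sigm (G (X w)) - 1)" for w
  have e_m[measurable]: "e \<in> borel_measurable M" unfolding e_def by measurable
  have e_bd: "\<bar>e w\<bar> \<le> \<bar>\<psi> w\<bar>" for w
  proof -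
    have "\<bar>2 * sigm (G (X w)) - 1\<bar> \<le> 1" using sigm_bounds[of "G (X w)"] by auto
    then show ?thesis unfolding e_def abs_mult by (simp add: mult_left_le)
  qed
  have d_eq: "d w = e w - \<psi> w" for w
    unfolding d_def e_def sgnpm_def by (auto simp: algebra_simps)
  have ind_int: "integrable M (\<lambda>w. indicator B (X w) * f w)"
    if "integrable M f" "B \<in> sets Sx" for f :: "'w \<Rightarrow> real" and B
    by (rule Bochner_Integration.integrable_bound[where f="f"])
       (use that in \<open>auto simp: indicator_def\<close>)
  have KB: "(\<integral>w. indicator B (X w) * e w \<partial>M) = (\<integral>w. indicator B (X w) * \<phi> w \<partial>M)"
    if B[measurable]: "B \<in> sets Sx" for B
  proof -
    have e_int: "integrable M e"
      by (rule Bochner_Integration.integrable_bound[where f="\<psi>"]) (use A1_int e_bd in auto)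
    have "0 = (\<integral>w. indicator B (X w) * d w \<partial>M)" using D0[OF B] by simp
    also have "\<dots> = (\<integral>w. indicator B (X w) * e w - indicator B (X w) * \<psi> w \<partial>M)"
      unfolding d_eq by (simp add: algebra_simps)
    also have "\<dots> = (\<integral>w. indicator B (X w) * e w \<partial>M) - (\<integral>w. indicator B (X w) * \<psi> w \<partial>M)"
      using ind_int[OF e_int B] ind_int[OF A1_int B] by simp
    finally have 1: "(\<integral>w. indicator B (X w) * e w \<partial>M) = (\<integral>w. indicator B (X w) * \<psi> w \<partial>M)" by simp
    have fF: "(\<lambda>w. indicator B (X w) :: real) \<in> borel_measurable F"
      using measurable_compose[OF XF borel_measurable_indicator[OF B]] by (simp add: o_def)
    have "(\<integral>w. indicator B (X w) * \<phi> w \<partial>M) = (\<integral>w. indicator B (X w) * \<psi> w \<partial>M)"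
      unfolding \<phi>_def by (rule S.real_cond_exp_intg(2)[OF ind_int[OF A1_int B] fF psi_m])
    with 1 show ?thesis by simp
  qed
  have Fset: "\<exists>B\<in>sets Sx. \<forall>w\<in>space M. (X w \<in> B) = P w"
    if PF: "{w\<in>space M. P w} \<in> sets F" for P
  proof -
    obtain A where "A \<in> sets Sx" "{w\<in>space M. P w} = X -` A \<inter> space M"
    proof -
      have "{w\<in>space M. P w} \<in> {X -` A \<inter> space M | A. A \<in> sets Sx}" using PF setsF by simp
      then show ?thesis using that by blast
    qed
    then show ?thesis by (intro bexI[of _ A]) auto
  qed
  have AE1: "AE w in M. \<not> (\<phi> w < 0 \<and> 0 \<le> G (X w))"
  proof -
    have "{w\<in>space F. \<phi> w < 0} \<in> sets F" by measurable
    then have "{w\<in>space M. \<phi> w < 0} \<in> sets F" by (simp add: spF)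
    then obtain B1 where B1: "B1 \<in> sets Sx" "\<forall>w\<in>space M. (X w \<in> B1) = (\<phi> w < 0)"
      using Fset[of "\<lambda>w. \<phi> w < 0"] by blast
    define B where "B = B1 \<inter> {x\<in>space Sx. 0 \<le> G x}"
    have B[measurable]: "B \<in> sets Sx" unfolding B_def using B1(1) by measurable
    have inB: "(X w \<in> B) = (\<phi> w < 0 \<and> 0 \<le> G (X w))" if "w \<in> space M" for w
      using B1(2) that Xf unfolding B_def by auto
    have "0 \<le> (\<integral>w. indicator B (X w) * e w \<partial>M)"
    proof (rule integral_nonneg_AE, rule AE_I2)
      fix w assume w: "w \<in> space M"
      show "0 \<le> indicator B (X w) * e w"
      proof (cases "X w \<in> B")
        case True
        then have "1/2 \<le> sigm (G (X w))" using inB[OF w] sigm_pos_half by auto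
        then show ?thesis using True unfolding e_def by simp
      qed simp
    qed
    then have I0: "0 \<le> (\<integral>w. indicator B (X w) * \<phi> w \<partial>M)" using KB[OF B] by simp
    have nn: "AE w in M. 0 \<le> - (indicator B (X w) * \<phi> w)"
      by (rule AE_I2) (use inB in \<open>auto simp: indicator_def\<close>)
    have "0 \<le> (\<integral>w. - (indicator B (X w) * \<phi> w) \<partial>M)" using nn by (rule integral_nonneg_AE)
    then have "(\<integral>w. - (indicator B (X w) * \<phi> w) \<partial>M) = 0" using I0 by simp
    then have "AE w in M. - (indicator B (X w) * \<phi> w) = 0"
      using integral_nonneg_eq_0_iff_AE[OF _ nn] ind_int[OF phi_int B] by simp
    then show ?thesis
    proof (rule AE_mp, intro AE_I2 impI)
      fix w assume "w \<in> space M" and h0: "- (indicator B (X w) * \<phi> w) = 0"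
      then show "\<not> (\<phi> w < 0 \<and> 0 \<le> G (X w))" using inB[of w] h0 by (auto simp: indicator_def split: if_splits)
    qed
  qed
  have AE2: "AE w in M. \<not> (\<phi> w > 0 \<and> G (X w) < 0)"
  proof -
    have "{w\<in>space F. \<phi> w > 0} \<in> sets F" by measurable
    then have "{w\<in>space M. \<phi> w > 0} \<in> sets F" by (simp add: spF)
    then obtain B1 where B1: "B1 \<in> sets Sx" "\<forall>w\<in>space M. (X w \<in> B1) = (\<phi> w > 0)"
      using Fset[of "\<lambda>w. \<phi> w > 0"] by blast
    define B where "B = B1 \<inter> {x\<in>space Sx. G x < 0}"
    have B[measurable]: "B \<in> sets Sx" unfolding B_def using B1(1) by measurable
    have inB: "(X w \<in> B) = (\<phi> w > 0 \<and> G (X w) < 0)" if "w \<in> space M" for w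
      using B1(2) that Xf unfolding B_def by auto
    have "0 \<le> (\<integral>w. - (indicator B (X w) * e w) \<partial>M)"
    proof (rule integral_nonneg_AE, rule AE_I2)
      fix w assume w: "w \<in> space M"
      show "0 \<le> - (indicator B (X w) * e w)"
      proof (cases "X w \<in> B")
        case True
        then have "sigm (G (X w)) < 1/2" using inB[OF w] sigm_neg_half by auto
        then show ?thesis using True unfolding e_def by (simp add: mult_nonneg_nonpos)
      qed simp
    qed
    then have "(\<integral>w. indicator B (X w) * e w \<partial>M) \<le> 0" by simp
    then have I0: "(\<integral>w. indicator B (X w) * \<phi> w \<partial>M) \<le> 0" using KB[OF B] by simp
    have nn: "AE w in M. 0 \<le> indicator B (X w) * \<phi> w"
      by (rule AE_I2) (use inB in \<open>auto simp: indicator_def\<close>)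
    have "0 \<le> (\<integral>w. indicator B (X w) * \<phi> w \<partial>M)" using nn by (rule integral_nonneg_AE)
    then have "(\<integral>w. indicator B (X w) * \<phi> w \<partial>M) = 0" using I0 by simp
    then have "AE w in M. indicator B (X w) * \<phi> w = 0"
      using integral_nonneg_eq_0_iff_AE[OF ind_int[OF phi_int B] nn] by simp
    then show ?thesis
    proof (rule AE_mp, intro AE_I2 impI)
      fix w assume "w \<in> space M" and h0: "indicator B (X w) * \<phi> w = 0"
      then show "\<not> (\<phi> w > 0 \<and> G (X w) < 0)" using inB[of w] h0 by (auto simp: indicator_def split: if_splits)
    qed
  qed
  have AEs: "AE w in M. sgnpm (G (X w)) * \<phi> w = \<bar>\<phi> w\<bar>"
    using AE1 AE2 by eventually_elim (auto simp: sgnpm_def)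
  have J_eq: "Jpol M X Y0 Y1 \<pi> = (\<integral>w. \<pi> (X w) * \<phi> w \<partial>M)"
    if pm[measurable]: "\<pi> \<in> borel_measurable Sx" and pb: "\<forall>x\<in>space Sx. \<bar>\<pi> x\<bar> \<le> 1" for \<pi>
  proof -
    have fF: "(\<lambda>w. \<pi> (X w)) \<in> borel_measurable F"
      using measurable_compose[OF XF pm] by (simp add: o_def)
    have bd: "\<bar>\<pi> (X w)\<bar> \<le> 1" if "w \<in> space M" for w using pb Xf that by auto
    have fi: "integrable M (\<lambda>w. \<pi> (X w) * (Y1 w - Y0 w))"
      by (rule Bochner_Integration.integrable_bound[where f="\<lambda>w. Y1 w - Y0 w"])
         (use int_tau bd in \<open>auto intro!: AE_I2 simp: abs_mult intro: mult_left_le_one_le\<close>)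
    have "Jpol M X Y0 Y1 \<pi> = (\<integral>w. \<pi> (X w) * real_cond_exp M F (\<lambda>w. Y1 w - Y0 w) w \<partial>M)"
      unfolding Jpol_def by (rule S.real_cond_exp_intg(2)[OF fi fF tau_m, symmetric])
    also have "\<dots> = (\<integral>w. \<pi> (X w) * \<phi> w \<partial>M)"
    proof (rule integral_cong_AE)
      show "AE w in M. \<pi> (X w) * real_cond_exp M F (\<lambda>w. Y1 w - Y0 w) w = \<pi> (X w) * \<phi> w"
        using A1_cond unfolding \<phi>_def F_def[symmetric] by eventually_elim simp
    qed auto
    finally show ?thesis .
  qed
  have Jle: "(\<integral>w. \<pi> (X w) * \<phi> w \<partial>M) \<le> (\<integral>w. \<bar>\<phi> w\<bar> \<partial>M)"
    if pm[measurable]: "\<pi> \<in> borel_measurable Sx" and pb: "\<forall>x\<in>space Sx. \<bar>\<pi> x\<bar> \<le> 1" for \<pi>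
  proof -
    have bd: "\<bar>\<pi> (X w)\<bar> \<le> 1" if "w \<in> space M" for w using pb Xf that by auto
    have pi_int: "integrable M (\<lambda>w. \<pi> (X w) * \<phi> w)"
      by (rule Bochner_Integration.integrable_bound[where f="\<phi>"])
         (use phi_int bd in \<open>auto intro!: AE_I2 simp: abs_mult intro: mult_left_le_one_le\<close>)
    show ?thesis
    proof (rule integral_mono[OF pi_int])
      show "integrable M (\<lambda>w. \<bar>\<phi> w\<bar>)" using phi_int by simp
      fix w assume "w \<in> space M"
      then have "\<bar>\<pi> (X w)\<bar> \<le> 1" by (rule bd)
      then have "\<bar>\<pi> (X w) * \<phi> w\<bar> \<le> \<bar>\<phi> w\<bar>" by (simp add: abs_mult mult_left_le_one_le)
      then show "\<pi> (X w) * \<phi> w \<le> \<bar>\<phi> w\<bar>" by linarith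
    qed
  qed
  have sG_pol: "(\<lambda>x. sgnpm (G x)) \<in> policies Sx"
    unfolding policies_def using sgnpm_vals by auto
  have pol_bd: "\<forall>x\<in>space Sx. \<bar>\<pi> x\<bar> \<le> 1" if "\<pi> \<in> policies Sx" for \<pi>
    using that unfolding policies_def by auto
  have pol_m: "\<pi> \<in> borel_measurable Sx" if "\<pi> \<in> policies Sx" for \<pi>
    using that unfolding policies_def by auto
  have JG: "Jpol M X Y0 Y1 (\<lambda>x. sgnpm (G x)) = (\<integral>w. \<bar>\<phi> w\<bar> \<partial>M)"
  proof -
    have "Jpol M X Y0 Y1 (\<lambda>x. sgnpm (G x)) = (\<integral>w. sgnpm (G (X w)) * \<phi> w \<partial>M)"
      using J_eq[OF pol_m[OF sG_pol] pol_bd[OF sG_pol]] .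
    also have "\<dots> = (\<integral>w. \<bar>\<phi> w\<bar> \<partial>M)"
      using AEs by (intro integral_cong_AE) auto
    finally show ?thesis .
  qed
  have "(SUP \<pi>\<in>policies Sx. Jpol M X Y0 Y1 \<pi>) = Jpol M X Y0 Y1 (\<lambda>x. sgnpm (G x))"
  proof (rule cSup_eq_maximum)
    show "Jpol M X Y0 Y1 (\<lambda>x. sgnpm (G x)) \<in> Jpol M X Y0 Y1 ` policies Sx"
      using sG_pol by blast
  next
    fix y assume "y \<in> Jpol M X Y0 Y1 ` policies Sx"
    then obtain \<pi> where "\<pi> \<in> policies Sx" "y = Jpol M X Y0 Y1 \<pi>" by blast
    then show "y \<le> Jpol M X Y0 Y1 (\<lambda>x. sgnpm (G x))"
      using J_eq[OF pol_m pol_bd] Jle[OF pol_m pol_bd] JG by simp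
  qed
  then show ?thesis unfolding G_def by simp
qed

end
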